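(* In the setting of the context, suppose the weights are the true weights, $\omega=\omega_0$, and that $B^2/\sigma_a^2(g,\omega_0)\le n_0$ for $a\in\{0,1\}$. Write $s=\sqrt{\frac{\sigma_0^2(g,\omega_0)}{n_0}+\frac{\sigma_1^2(g,\omega_0)}{n_1}}$. Then with probability at least $\frac{7}{1440}$, $$ 12\,s\;\ge\;\left|\big(\mathcal{E}_0(g)-\mathcal{E}_1(g)\big)-\big(\widehat{\mathcal{E}}_0(g,\omega)-\widehat{\mathcal{E}}_1(g,\omega)\big)\right|\;\ge\;\frac{1}{24}\,s . $$ Additionally (on this event), if $\widehat{\Delta}_S(g,\omega)\ge\frac{13}{2}s$ then $|\Delta_T(g)-\widehat{\Delta}_S(g,\omega)|\ge\frac{1}{24}s$, and if $\widehat{\Delta}_S(g,\omega)\le\frac{1}{72}s$ then $|\Delta_T(g)-\widehat{\Delta}_S(g,\omega)|\ge\frac{1}{72}s$.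
   Context: A random sample of observations is drawn from a target population; each has data vector $z=(x,y)$, possibly with missing entries, and a binary sensitive attribute $A\in\{0,1\}$. $R=1$ if $z$ is fully observed (complete case). $\mathcal{D}_{T_a}$ is the distribution of $z$ in group $A=a$; $\mathcal{D}_{S_a}$ is the distribution of $z$ given $R=1,A=a$, with expectation/variance $\mathbb{E}_{S_a}$, $\mathrm{Var}_{S_a}$; $\mathbb{E}_S$ is expectation under the distribution of complete cases. A fixed prediction model $g$ and the response take values in $[0,1]$. $\mathcal{E}_a(g)=\mathbb{E}_{T_a}|g(x)-y|$, $\Delta_T(g)=|\mathcal{E}_0(g)-\mathcal{E}_1(g)|$. The true propensity score is $\pi(z,A)=P_T(R=1\mid z,A)$ and the true weights are $\omega_0(z,A)=\left[\pi(z,A)\,\mathbb{E}_S\{1/\pi(z',A')\mid A'=A\}\right]^{-1}$, assumed bounded with $B=\sup_z\omega_0(z,A)<\infty$. $\sigma_a^2(g,\omega)=\mathrm{Var}_{S_a}(\omega(z,a)|g(x)-y|)$. The complete cases consist of $n_0$ i.i.d. draws from $\mathcal{D}_{S_0}$ and $n_1$ i.i.d. draws from $\mathcal{D}_{S_1}$, with $n_0\le n_1$. The weighted empirical risk is $\widehat{\mathcal{E}}_a(g,\omega)=\frac{1}{n_a}\sum_{i:\,A_i=a,R_i=1}\omega(z_i,a)|g(x_i)-y_i|$ and $\widehat{\Delta}_S(g,\omega)=|\widehat{\mathcal{E}}_0(g,\omega)-\widehat{\mathcal{E}}_1(g,\omega)|$. *)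

theory Defs
  imports "HOL-Probability.Probability"
begin

text \<open>Data points z = (x, y); groups a are encoded by the naturals 0 and 1.
  T a : the target distribution D_{T_a} of z in group a.
  pr z a : the true propensity score P_T(R = 1 | z, A = a).\<close>

definition loss :: "('x \<Rightarrow> real) \<Rightarrow> 'x \<times> real \<Rightarrow> real" where
  "loss g z = \<bar>g (fst z) - snd z\<bar>"

text \<open>Distribution D_{S_a} of z given R = 1, A = a (Bayes' rule):
  density pr(.,a) / E_{T_a}[pr(.,a)] with respect to D_{T_a}.\<close>
definition cc_dist :: "(nat \<Rightarrow> ('x \<times> real) measure) \<Rightarrow> ('x \<times> real \<Rightarrow> nat \<Rightarrow> real)
    \<Rightarrow> nat \<Rightarrow> ('x \<times> real) measure" where
  "cc_dist T pr a = density (T a) (\<lambda>z. ennreal (pr z a / (\<integral>z'. pr z' a \<partial>T a)))"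

definition true_weight :: "(nat \<Rightarrow> ('x \<times> real) measure) \<Rightarrow> ('x \<times> real \<Rightarrow> nat \<Rightarrow> real)
    \<Rightarrow> 'x \<times> real \<Rightarrow> nat \<Rightarrow> real" where
  "true_weight T pr z a = 1 / (pr z a * (\<integral>z'. 1 / pr z' a \<partial>cc_dist T pr a))"

definition true_risk :: "(nat \<Rightarrow> ('x \<times> real) measure) \<Rightarrow> ('x \<Rightarrow> real) \<Rightarrow> nat \<Rightarrow> real" where
  "true_risk T g a = (\<integral>z. loss g z \<partial>T a)"

definition sigma2 :: "(nat \<Rightarrow> ('x \<times> real) measure) \<Rightarrow> ('x \<times> real \<Rightarrow> nat \<Rightarrow> real)
    \<Rightarrow> ('x \<Rightarrow> real) \<Rightarrow> ('x \<times> real \<Rightarrow> nat \<Rightarrow> real) \<Rightarrow> nat \<Rightarrow> real" where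
  "sigma2 T pr g w a = prob_space.variance (cc_dist T pr a) (\<lambda>z. w z a * loss g z)"

definition emp_risk :: "('x \<Rightarrow> real) \<Rightarrow> ('x \<times> real \<Rightarrow> nat \<Rightarrow> real) \<Rightarrow> nat \<Rightarrow> nat
    \<Rightarrow> (nat \<Rightarrow> 'x \<times> real) \<Rightarrow> real" where
  "emp_risk g w a n u = (1 / real n) * (\<Sum>i<n. w (u i) a * loss g (u i))"

definition sample_space :: "(nat \<Rightarrow> ('x \<times> real) measure) \<Rightarrow> ('x \<times> real \<Rightarrow> nat \<Rightarrow> real)
    \<Rightarrow> nat \<Rightarrow> nat \<Rightarrow> ((nat \<Rightarrow> 'x \<times> real) \<times> (nat \<Rightarrow> 'x \<times> real)) measure" where
  "sample_space T pr n0 n1 =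
     (PiM {..<n0} (\<lambda>_. cc_dist T pr 0)) \<Otimes>\<^sub>M (PiM {..<n1} (\<lambda>_. cc_dist T pr 1))"

end

theory Submission
  imports Defs
begin

lemma pow_moments:
  fixes h :: "'a \<Rightarrow> real"
  assumes N: "prob_space N" and hm: "h \<in> borel_measurable N" and hb: "AE y in N. \<bar>h y\<bar> \<le> C"
  shows "integrable N (\<lambda>y. h y ^ k)"
proof -
  interpret prob_space N by fact
  show ?thesis
  proof (rule integrable_const_bound[where B="C ^ k"])
    show "AE x in N. norm (h x ^ k) \<le> C ^ k"
      using hb by eventually_elim (auto simp: power_abs intro: power_mono)
  qed (use hm in simp)
qed

lemma shift_moments:
  fixes h :: "'a \<Rightarrow> real"
  assumes N: "prob_space N" and hm: "h \<in> borel_measurable N" and hb: "AE y in N. \<bar>h y\<bar> \<le> C"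
  shows "(\<integral>y. (a + h y)^2 \<partial>N) = a^2 + 2*a*(\<integral>y. h y \<partial>N) + (\<integral>y. h y ^ 2 \<partial>N)"
    and "(\<integral>y. (a + h y)^4 \<partial>N) = a^4 + 4*a^3*(\<integral>y. h y \<partial>N) + 6*a^2*(\<integral>y. h y ^ 2 \<partial>N)
          + 4*a*(\<integral>y. h y ^ 3 \<partial>N) + (\<integral>y. h y ^ 4 \<partial>N)"
proof -
  interpret prob_space N by fact
  have i: "integrable N (\<lambda>y. h y ^ k)" for k using pow_moments[OF N hm hb] .
  have i1: "integrable N h" using i[of 1] by simp
  have e2: "(\<lambda>y. (a + h y)^2) = (\<lambda>y. a^2 + (2*a*h y + h y ^ 2))"
    by (auto simp: power2_eq_square algebra_simps)
  show "(\<integral>y. (a + h y)^2 \<partial>N) = a^2 + 2*a*(\<integral>y. h y \<partial>N) + (\<integral>y. h y ^ 2 \<partial>N)"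
    unfolding e2 using i i1 by (simp add: prob_space)
  have e4: "(\<lambda>y. (a + h y)^4) = (\<lambda>y. a^4 + (4*a^3*h y + (6*a^2*h y ^ 2 + (4*a*h y ^ 3 + h y ^ 4))))"
    by (auto simp: algebra_simps power_numeral_reduce)
  show "(\<integral>y. (a + h y)^4 \<partial>N) = a^4 + 4*a^3*(\<integral>y. h y \<partial>N) + 6*a^2*(\<integral>y. h y ^ 2 \<partial>N)
          + 4*a*(\<integral>y. h y ^ 3 \<partial>N) + (\<integral>y. h y ^ 4 \<partial>N)"
    unfolding e4 using i i1 by (simp add: prob_space)
qed


lemma sum_moments:
  fixes f :: "'a \<Rightarrow> real"
  assumes M: "prob_space M" and fm[measurable]: "f \<in> borel_measurable M"
    and fb: "AE y in M. \<bar>f y\<bar> \<le> C"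
    and f0: "(\<integral>y. f y \<partial>M) = 0" and f2: "(\<integral>y. f y ^ 2 \<partial>M) = v"
  shows "prob_space (PiM {..<n} (\<lambda>_. M))"
    and "(\<lambda>x. \<Sum>i<n. f (x i)) \<in> borel_measurable (PiM {..<n} (\<lambda>_. M))"
    and "AE x in PiM {..<n} (\<lambda>_. M). \<bar>\<Sum>i<n. f (x i)\<bar> \<le> real n * C"
    and "(\<integral>x. (\<Sum>i<n. f (x i)) \<partial>PiM {..<n} (\<lambda>_. M)) = 0"
    and "(\<integral>x. (\<Sum>i<n. f (x i))^2 \<partial>PiM {..<n} (\<lambda>_. M)) = real n * v"
    and "(\<integral>x. (\<Sum>i<n. f (x i))^4 \<partial>PiM {..<n} (\<lambda>_. M)) \<le> real n * C^2 * v + 3 * (real n)^2 * v^2"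
proof -
  interpret M: prob_space M by fact
  have P: "prob_space (PiM {..<m} (\<lambda>_. M))" for m
    by (rule prob_space_PiM) (use M in auto)
  then show "prob_space (PiM {..<n} (\<lambda>_. M))" .
  have meas: "(\<lambda>x. \<Sum>i<m. f (x i)) \<in> borel_measurable (PiM {..<m} (\<lambda>_. M))" for m
    by measurable
  then show "(\<lambda>x. \<Sum>i<n. f (x i)) \<in> borel_measurable (PiM {..<n} (\<lambda>_. M))" .
  have aeb: "AE x in PiM {..<m} (\<lambda>_. M). \<bar>\<Sum>i<m. f (x i)\<bar> \<le> real m * C" for m
  proof -
    have "AE x in PiM {..<m} (\<lambda>_. M). \<forall>i\<in>{..<m}. \<bar>f (x i)\<bar> \<le> C"
      by (rule AE_finite_allI) (auto intro!: AE_PiM_component fb M)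
    then show ?thesis
    proof eventually_elim
      case (elim x)
      have "\<bar>\<Sum>i<m. f (x i)\<bar> \<le> (\<Sum>i<m. \<bar>f (x i)\<bar>)" by (rule sum_abs)
      also have "\<dots> \<le> (\<Sum>i<m. C)" using elim by (intro sum_mono) auto
      finally show ?case by simp
    qed
  qed
  then show "AE x in PiM {..<n} (\<lambda>_. M). \<bar>\<Sum>i<n. f (x i)\<bar> \<le> real n * C" .
  have int: "integrable (PiM {..<m} (\<lambda>_. M)) (\<lambda>x. (\<Sum>i<m. f (x i)) ^ k)" for m :: nat and k
    by (rule pow_moments[OF P[of m] meas[of m] aeb[of m]])
  have vnn: "0 \<le> v" unfolding f2[symmetric] by simp
  have m4: "(\<integral>y. f y ^ 4 \<partial>M) \<le> C^2 * v"
  proof -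
    have "(\<integral>y. f y ^ 4 \<partial>M) \<le> (\<integral>y. C^2 * f y ^ 2 \<partial>M)"
    proof (rule integral_mono_AE)
      show "integrable M (\<lambda>y. f y ^ 4)" using pow_moments[OF M fm fb] .
      show "integrable M (\<lambda>y. C^2 * f y ^ 2)" using pow_moments[OF M fm fb] by simp
      show "AE y in M. f y ^ 4 \<le> C^2 * f y ^ 2"
        using fb proof eventually_elim
        case (elim y)
        have "f y ^ 2 \<le> C^2" using elim by (metis abs_le_square_iff abs_square_le_1 power2_abs abs_ge_zero
            le_less_trans not_le power_mono)
        then have "f y ^ 2 * f y ^ 2 \<le> C^2 * f y ^ 2" by (intro mult_right_mono) auto
        then show ?case by (simp add: power_numeral_reduce algebra_simps)
      qed
    qed
    also have "\<dots> = C^2 * v" using f2 by simp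
    finally show ?thesis .
  qed
  interpret PS: product_prob_space "\<lambda>_. M" "UNIV"
    by unfold_locales
  have step: "(\<integral>x. g (\<Sum>i<Suc m. f (x i)) \<partial>PiM {..<Suc m} (\<lambda>_. M))
      = (\<integral>x. (\<integral>y. g ((\<Sum>i<m. f (x i)) + f y) \<partial>M) \<partial>PiM {..<m} (\<lambda>_. M))"
    if gi: "integrable (PiM {..<Suc m} (\<lambda>_. M)) (\<lambda>x. g (\<Sum>i<Suc m. f (x i)))" for m and g :: "real \<Rightarrow> real"
  proof -
    have ins: "{..<Suc m} = insert m {..<m}" by auto
    have "(\<integral>x. g (\<Sum>i<Suc m. f (x i)) \<partial>PiM {..<Suc m} (\<lambda>_. M))
      = (\<integral>x. (\<integral>y. g (\<Sum>i<Suc m. f ((x(m:=y)) i)) \<partial>M) \<partial>PiM {..<m} (\<lambda>_. M))"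
      using PS.product_integral_insert[of "{..<m}" m "\<lambda>x. g (\<Sum>i<Suc m. f (x i))"] gi
      unfolding ins by simp
    also have "\<dots> = (\<integral>x. (\<integral>y. g ((\<Sum>i<m. f (x i)) + f y) \<partial>M) \<partial>PiM {..<m} (\<lambda>_. M))"
      by (intro Bochner_Integration.integral_cong refl arg_cong[where f=g]) (simp add: add.commute)
    finally show ?thesis .
  qed
  have mom: "(\<integral>x. (\<Sum>i<m. f (x i)) \<partial>PiM {..<m} (\<lambda>_. M)) = 0 \<and>
     (\<integral>x. (\<Sum>i<m. f (x i))^2 \<partial>PiM {..<m} (\<lambda>_. M)) = real m * v \<and>
     (\<integral>x. (\<Sum>i<m. f (x i))^4 \<partial>PiM {..<m} (\<lambda>_. M)) \<le> real m * C^2 * v + 3 * (real m)^2 * v^2" for m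
  proof (induction m)
    case 0
    interpret P0: prob_space "PiM {..<0::nat} (\<lambda>_. M)" by (rule P)
    show ?case by simp
  next
    case (Suc m)
    let ?S = "\<lambda>x. \<Sum>i<m. f (x i)"
    let ?P = "PiM {..<m} (\<lambda>_. M)"
    interpret Pm: prob_space ?P by (rule P)
    have I1: "integrable ?P ?S" using int[of m 1] by simp
    have e1: "(\<integral>x. (\<Sum>i<Suc m. f (x i)) \<partial>PiM {..<Suc m} (\<lambda>_. M)) = 0"
    proof -
      have "(\<integral>x. (\<Sum>i<Suc m. f (x i)) \<partial>PiM {..<Suc m} (\<lambda>_. M))
          = (\<integral>x. (\<integral>y. ?S x + f y \<partial>M) \<partial>?P)"
        using step[of m "\<lambda>t. t"] int[of "Suc m" 1] by simp
      also have "\<dots> = (\<integral>x. ?S x \<partial>?P)"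
        using pow_moments[OF M fm fb, of 1] by (simp add: f0 M.prob_space)
      finally show ?thesis using Suc.IH by simp
    qed
    have e2: "(\<integral>x. (\<Sum>i<Suc m. f (x i))^2 \<partial>PiM {..<Suc m} (\<lambda>_. M)) = real (Suc m) * v"
    proof -
      have "(\<integral>x. (\<Sum>i<Suc m. f (x i))^2 \<partial>PiM {..<Suc m} (\<lambda>_. M))
          = (\<integral>x. (\<integral>y. (?S x + f y)^2 \<partial>M) \<partial>?P)"
        using step[of m "\<lambda>t. t^2"] int[of "Suc m" 2] by simp
      also have "\<dots> = (\<integral>x. ?S x ^ 2 + v \<partial>?P)"
        using shift_moments(1)[OF M fm fb] by (simp add: f0 f2)
      also have "\<dots> = (\<integral>x. ?S x ^ 2 \<partial>?P) + v"
        using int[of m 2] by (simp add: Pm.prob_space)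
      finally show ?thesis using Suc.IH by (simp add: algebra_simps)
    qed
    have e4: "(\<integral>x. (\<Sum>i<Suc m. f (x i))^4 \<partial>PiM {..<Suc m} (\<lambda>_. M))
        \<le> real (Suc m) * C^2 * v + 3 * (real (Suc m))^2 * v^2"
    proof -
      let ?m3 = "\<integral>y. f y ^ 3 \<partial>M" and ?m4 = "\<integral>y. f y ^ 4 \<partial>M"
      have "(\<integral>x. (\<Sum>i<Suc m. f (x i))^4 \<partial>PiM {..<Suc m} (\<lambda>_. M))
          = (\<integral>x. (\<integral>y. (?S x + f y)^4 \<partial>M) \<partial>?P)"
        using step[of m "\<lambda>t. t^4"] int[of "Suc m" 4] by simp
      also have "\<dots> = (\<integral>x. ?S x ^ 4 + (6 * v * ?S x ^ 2 + (4 * ?m3 * ?S x + ?m4)) \<partial>?P)"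
      proof -
        have "(\<integral>y. (a + f y)^4 \<partial>M) = a ^ 4 + (6 * v * a ^ 2 + (4 * ?m3 * a + ?m4))" for a
          using shift_moments(2)[OF M fm fb, of a] by (simp add: f0 f2)
        then show ?thesis by simp
      qed
      also have "\<dots> = (\<integral>x. ?S x ^ 4 \<partial>?P) + 6 * v * (\<integral>x. ?S x ^ 2 \<partial>?P) + 4 * ?m3 * (\<integral>x. ?S x \<partial>?P) + ?m4"
        using int[of m 4] int[of m 2] I1 by (simp add: Pm.prob_space)
      also have "\<dots> \<le> real m * C^2 * v + 3 * (real m)^2 * v^2 + 6 * v * (real m * v) + 0 + C^2 * v"
        using Suc.IH m4 by simp
      also have "\<dots> \<le> real (Suc m) * C^2 * v + 3 * (real (Suc m))^2 * v^2"
        using vnn by (simp add: algebra_simps power2_eq_square)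
      finally show ?thesis .
    qed
    show ?case using e1 e2 e4 by simp
  qed
  show "(\<integral>x. (\<Sum>i<n. f (x i)) \<partial>PiM {..<n} (\<lambda>_. M)) = 0"
    and "(\<integral>x. (\<Sum>i<n. f (x i))^2 \<partial>PiM {..<n} (\<lambda>_. M)) = real n * v"
    and "(\<integral>x. (\<Sum>i<n. f (x i))^4 \<partial>PiM {..<n} (\<lambda>_. M)) \<le> real n * C^2 * v + 3 * (real n)^2 * v^2"
    using mom[of n] by auto
qed


lemma pair_moments:
  fixes U :: "'a \<Rightarrow> real" and V :: "'b \<Rightarrow> real"
  assumes M1: "prob_space M1" and M2: "prob_space M2"
    and Um[measurable]: "U \<in> borel_measurable M1" and Ub: "AE x in M1. \<bar>U x\<bar> \<le> c1"
    and Vm[measurable]: "V \<in> borel_measurable M2" and Vb: "AE y in M2. \<bar>V y\<bar> \<le> c2"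
    and U0: "(\<integral>x. U x \<partial>M1) = 0" and V0: "(\<integral>y. V y \<partial>M2) = 0"
    and U2: "(\<integral>x. U x ^ 2 \<partial>M1) = a" and V2: "(\<integral>y. V y ^ 2 \<partial>M2) = b"
    and U4: "(\<integral>x. U x ^ 4 \<partial>M1) \<le> A" and V4: "(\<integral>y. V y ^ 4 \<partial>M2) \<le> Bq"
  shows "(\<lambda>z. U (fst z) + V (snd z)) \<in> borel_measurable (M1 \<Otimes>\<^sub>M M2)"
    and "integrable (M1 \<Otimes>\<^sub>M M2) (\<lambda>z. (U (fst z) + V (snd z)) ^ k)"
    and "(\<integral>z. (U (fst z) + V (snd z)) ^ 2 \<partial>(M1 \<Otimes>\<^sub>M M2)) = a + b"
    and "(\<integral>z. (U (fst z) + V (snd z)) ^ 4 \<partial>(M1 \<Otimes>\<^sub>M M2)) \<le> A + 6 * a * b + Bq"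
proof -
  interpret M1: prob_space M1 by fact
  interpret M2: prob_space M2 by fact
  interpret P: pair_prob_space M1 M2 by unfold_locales
  have PP: "prob_space (M1 \<Otimes>\<^sub>M M2)" by (rule prob_space_pair[OF M1 M2])
  show W: "(\<lambda>z. U (fst z) + V (snd z)) \<in> borel_measurable (M1 \<Otimes>\<^sub>M M2)" by measurable
  have aeW: "AE z in M1 \<Otimes>\<^sub>M M2. \<bar>U (fst z) + V (snd z)\<bar> \<le> c1 + c2"
  proof -
    have "AE z in M1 \<Otimes>\<^sub>M M2. \<bar>U (fst z)\<bar> \<le> c1 \<and> \<bar>V (snd z)\<bar> \<le> c2"
    proof (rule P.AE_pair_measure)
      show "{x \<in> space (M1 \<Otimes>\<^sub>M M2). \<bar>U (fst x)\<bar> \<le> c1 \<and> \<bar>V (snd x)\<bar> \<le> c2} \<in> sets (M1 \<Otimes>\<^sub>M M2)"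
        by measurable
      show "AE x in M1. AE y in M2. \<bar>U (fst (x, y))\<bar> \<le> c1 \<and> \<bar>V (snd (x, y))\<bar> \<le> c2"
        using Ub by eventually_elim (use Vb in auto)
    qed
    then show ?thesis by eventually_elim auto
  qed
  show I: "integrable (M1 \<Otimes>\<^sub>M M2) (\<lambda>z. (U (fst z) + V (snd z)) ^ k)" for k
    by (rule pow_moments[OF PP W aeW])
  have iU: "integrable M1 (\<lambda>x. U x ^ k)" for k by (rule pow_moments[OF M1 Um Ub])
  have iU1: "integrable M1 U" using iU[of 1] by simp
  have "(\<integral>z. (U (fst z) + V (snd z)) ^ 2 \<partial>(M1 \<Otimes>\<^sub>M M2))
      = (\<integral>x. (\<integral>y. (U x + V y) ^ 2 \<partial>M2) \<partial>M1)"
    using P.integral_fst'[OF I[of 2]] by simp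
  also have "\<dots> = (\<integral>x. U x ^ 2 + b \<partial>M1)"
    using shift_moments(1)[OF M2 Vm Vb] by (simp add: V0 V2)
  also have "\<dots> = a + b" using iU[of 2] by (simp add: U2 M1.prob_space)
  finally show "(\<integral>z. (U (fst z) + V (snd z)) ^ 2 \<partial>(M1 \<Otimes>\<^sub>M M2)) = a + b" .
  let ?m3 = "\<integral>y. V y ^ 3 \<partial>M2" and ?m4 = "\<integral>y. V y ^ 4 \<partial>M2"
  have "(\<integral>z. (U (fst z) + V (snd z)) ^ 4 \<partial>(M1 \<Otimes>\<^sub>M M2))
      = (\<integral>x. (\<integral>y. (U x + V y) ^ 4 \<partial>M2) \<partial>M1)"
    using P.integral_fst'[OF I[of 4]] by simp
  also have "\<dots> = (\<integral>x. U x ^ 4 + (6 * b * U x ^ 2 + (4 * ?m3 * U x + ?m4)) \<partial>M1)"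
  proof -
    have "(\<integral>y. (c + V y)^4 \<partial>M2) = c ^ 4 + (6 * b * c ^ 2 + (4 * ?m3 * c + ?m4))" for c
      using shift_moments(2)[OF M2 Vm Vb, of c] by (simp add: V0 V2)
    then show ?thesis by simp
  qed
  also have "\<dots> = (\<integral>x. U x ^ 4 \<partial>M1) + 6 * b * a + 4 * ?m3 * 0 + ?m4"
    using iU[of 4] iU[of 2] iU1 by (simp add: M1.prob_space U0 U2)
  also have "\<dots> \<le> A + 6 * a * b + Bq" using U4 V4 by simp
  finally show "(\<integral>z. (U (fst z) + V (snd z)) ^ 4 \<partial>(M1 \<Otimes>\<^sub>M M2)) \<le> A + 6 * a * b + Bq" .
qed


lemma group_facts:
  fixes N :: "'a measure" and p l :: "'a \<Rightarrow> real"
  assumes N: "prob_space N" and pm[measurable]: "p \<in> borel_measurable N"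
    and pr: "\<And>z. z \<in> space N \<Longrightarrow> 0 < p z \<and> p z \<le> 1"
    and lm[measurable]: "l \<in> borel_measurable N" and lb: "AE z in N. 0 \<le> l z \<and> l z \<le> 1"
  defines "c \<equiv> \<integral>z. p z \<partial>N"
  defines "M \<equiv> density N (\<lambda>z. ennreal (p z / c))"
  defines "K \<equiv> \<integral>z. 1 / p z \<partial>M"
  shows "0 < c" "prob_space M" "sets M = sets N" "space M = space N"
    "\<And>z. z \<in> space N \<Longrightarrow> 1 / (p z * K) = c / p z"
    "(\<integral>z. 1 / (p z * K) * l z \<partial>M) = (\<integral>z. l z \<partial>N)"
    "AE z in M. 0 \<le> l z \<and> l z \<le> 1"
proof -
  interpret N: prob_space N by fact
  have ip: "integrable N p"
    by (rule N.integrable_const_bound[where B=1]) (auto simp: pr less_imp_le)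
  have cnn: "0 \<le> c" unfolding c_def using pr by (auto intro!: integral_nonneg_AE simp: less_imp_le)
  show cpos: "0 < c"
  proof (rule ccontr)
    assume "\<not> 0 < c"
    then have "c = 0" using cnn by simp
    then have "AE z in N. p z = 0"
      using integral_nonneg_eq_0_iff_AE[OF ip] pr unfolding c_def by (auto simp: less_imp_le)
    then have "AE z in N. False" by (rule AE_mp) (auto intro!: AE_I2 dest: pr)
    then show False by simp
  qed
  show sM: "sets M = sets N" and spM: "space M = space N" unfolding M_def by auto
  have dens_m[measurable]: "(\<lambda>z. p z / c) \<in> borel_measurable N" by measurable
  have dnn: "AE z in N. 0 \<le> p z / c" using pr cpos by (auto intro!: AE_I2 simp: less_imp_le)
  show "prob_space M"
  proof
    have "emeasure M (space M) = (\<integral>\<^sup>+ z. ennreal (p z / c) \<partial>N)"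
      unfolding M_def by (simp add: emeasure_density)
    also have "\<dots> = ennreal (\<integral>z. p z / c \<partial>N)"
      by (rule nn_integral_eq_integral) (use ip dnn in auto)
    also have "\<dots> = 1" using cpos by (simp add: c_def)
    finally show "emeasure M (space M) = 1" .
  qed
  have intd: "(\<integral>z. f z \<partial>M) = (\<integral>z. (p z / c) * f z \<partial>N)" if [measurable]: "f \<in> borel_measurable N" for f
    unfolding M_def by (subst integral_density) (auto simp: dnn)
  have K: "K = 1 / c"
  proof -
    have "K = (\<integral>z. (p z / c) * (1 / p z) \<partial>N)" unfolding K_def by (rule intd) measurable
    also have "\<dots> = (\<integral>z. 1 / c \<partial>N)"
      by (rule Bochner_Integration.integral_cong) (auto dest: pr)
    finally show ?thesis by (simp add: N.prob_space)
  qed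
  show w: "\<And>z. z \<in> space N \<Longrightarrow> 1 / (p z * K) = c / p z" using K by simp
  have "(\<integral>z. 1 / (p z * K) * l z \<partial>M) = (\<integral>z. (p z / c) * (1 / (p z * K) * l z) \<partial>N)"
    by (rule intd) measurable
  also have "\<dots> = (\<integral>z. l z \<partial>N)"
    by (rule Bochner_Integration.integral_cong) (use cpos in \<open>auto simp: w dest: pr\<close>)
  finally show "(\<integral>z. 1 / (p z * K) * l z \<partial>M) = (\<integral>z. l z \<partial>N)" .
  show "AE z in M. 0 \<le> l z \<and> l z \<le> 1"
    unfolding M_def by (subst AE_density) (auto intro: AE_mp[OF lb])
qed


lemma poly_r:
  fixes r :: real assumes "0 \<le> r"
  shows "r/36 - r^2/5184 - 1/20736 \<le> (if 1/576 \<le> r \<and> r \<le> 144 then 1 else 0)"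
proof (cases "1/576 \<le> r \<and> r \<le> 144")
  case True
  have "0 \<le> (r - 72)^2" by simp
  then show ?thesis using True by (simp add: power2_eq_square algebra_simps)
next
  case False
  then consider "r < 1/576" | "144 < r" by linarith
  then show ?thesis
  proof cases
    case 1
    have "0 \<le> r * r" using assms by simp
    then have "r/36 - r^2/5184 - 1/20736 \<le> 0" using 1 unfolding power2_eq_square by linarith
    then show ?thesis using False by simp
  next
    case 2
    have "r * 144 \<le> r * r" using 2 assms by (intro mult_left_mono) auto
    then show ?thesis using False by (simp add: power2_eq_square)
  qed
qed

lemma poly_ind:
  fixes t s :: real assumes s: "0 < s"
  shows "t^2/(36 * s^2) - t^4/(5184 * s^4) - 1/20736 \<le> (if s/24 \<le> \<bar>t\<bar> \<and> \<bar>t\<bar> \<le> 12 * s then 1 else 0)"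
proof -
  define r where "r = t^2/s^2"
  have r0: "0 \<le> r" unfolding r_def by simp
  have e: "t^2/(36 * s^2) - t^4/(5184 * s^4) - 1/20736 = r/36 - r^2/5184 - 1/20736"
    unfolding r_def by (simp add: power2_eq_square power4_eq_xxxx field_simps)
  have c1: "s/24 \<le> \<bar>t\<bar> \<longleftrightarrow> 1/576 \<le> r"
  proof -
    have "s/24 \<le> \<bar>t\<bar> \<longleftrightarrow> (s/24)^2 \<le> \<bar>t\<bar>^2"
      using abs_le_square_iff[of "s/24" "\<bar>t\<bar>"] s by simp
    also have "\<dots> \<longleftrightarrow> 1/576 \<le> r" unfolding r_def using s by (simp add: field_simps power2_eq_square)
    finally show ?thesis .
  qed
  have c2: "\<bar>t\<bar> \<le> 12 * s \<longleftrightarrow> r \<le> 144"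
  proof -
    have "\<bar>t\<bar> \<le> 12 * s \<longleftrightarrow> \<bar>t\<bar>^2 \<le> (12 * s)^2"
      using s by (metis abs_le_square_iff abs_abs abs_of_pos mult_pos_pos zero_less_numeral)
    also have "\<dots> \<longleftrightarrow> r \<le> 144" unfolding r_def using s by (simp add: field_simps power2_eq_square)
    finally show ?thesis .
  qed
  show ?thesis unfolding e c1 c2 by (rule poly_r[OF r0])
qed

lemma det_part:
  fixes X Y s :: real
  assumes "s/24 \<le> \<bar>X - Y\<bar>" "\<bar>X - Y\<bar> \<le> 12 * s" "0 < s"
  shows "(\<bar>Y\<bar> \<ge> 13/2 * s \<longrightarrow> \<bar>\<bar>X\<bar> - \<bar>Y\<bar>\<bar> \<ge> s/24) \<and> (\<bar>Y\<bar> \<le> s/72 \<longrightarrow> \<bar>\<bar>X\<bar> - \<bar>Y\<bar>\<bar> \<ge> s/72)"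
  using assms by (auto simp: abs_if split: if_splits)


lemma group_facts':
  fixes T :: "nat \<Rightarrow> ('x \<times> real) measure" and pr :: "'x \<times> real \<Rightarrow> nat \<Rightarrow> real" and g :: "'x \<Rightarrow> real"
  assumes N: "prob_space (T a)" and pm: "(\<lambda>z. pr z a) \<in> borel_measurable (T a)"
    and pr: "\<And>z. z \<in> space (T a) \<Longrightarrow> 0 < pr z a \<and> pr z a \<le> 1"
    and lm: "loss g \<in> borel_measurable (T a)" and lb: "AE z in T a. 0 \<le> loss g z \<and> loss g z \<le> 1"
  shows "prob_space (cc_dist T pr a)" "sets (cc_dist T pr a) = sets (T a)"
    "space (cc_dist T pr a) = space (T a)"
    "\<And>z. z \<in> space (T a) \<Longrightarrow> 0 < true_weight T pr z a"
    "(\<lambda>z. true_weight T pr z a) \<in> borel_measurable (T a)"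
    "(\<integral>z. true_weight T pr z a * loss g z \<partial>cc_dist T pr a) = true_risk T g a"
    "AE z in cc_dist T pr a. 0 \<le> loss g z \<and> loss g z \<le> 1"
proof -
  note G = group_facts[of "T a" "\<lambda>z. pr z a" "loss g", OF N pm pr lm lb]
  show "prob_space (cc_dist T pr a)" "sets (cc_dist T pr a) = sets (T a)"
    "space (cc_dist T pr a) = space (T a)"
    "(\<integral>z. true_weight T pr z a * loss g z \<partial>cc_dist T pr a) = true_risk T g a"
    "AE z in cc_dist T pr a. 0 \<le> loss g z \<and> loss g z \<le> 1"
    using G unfolding cc_dist_def true_weight_def true_risk_def by auto
  show "0 < true_weight T pr z a" if "z \<in> space (T a)" for z
    using G(1) G(5)[OF _ that] pr[OF that] that unfolding cc_dist_def true_weight_def by auto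
  show "(\<lambda>z. true_weight T pr z a) \<in> borel_measurable (T a)"
    unfolding true_weight_def using pm by measurable
qed

lemma scaled_moments:
  fixes f :: "'a \<Rightarrow> real"
  assumes M: "prob_space M" and fm[measurable]: "f \<in> borel_measurable M"
    and fb: "AE y in M. \<bar>f y\<bar> \<le> C"
    and f0: "(\<integral>y. f y \<partial>M) = 0" and f2: "(\<integral>y. f y ^ 2 \<partial>M) = v"
    and n: "0 < n" and Cv: "C^2 \<le> real n * v" and c: "\<bar>c\<bar> = 1"
  defines "W \<equiv> \<lambda>x. c * (\<Sum>i<n. f (x i)) / real n"
  shows "prob_space (PiM {..<n} (\<lambda>_. M))"
    and "W \<in> borel_measurable (PiM {..<n} (\<lambda>_. M))"
    and "AE x in PiM {..<n} (\<lambda>_. M). \<bar>W x\<bar> \<le> C"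
    and "(\<integral>x. W x \<partial>PiM {..<n} (\<lambda>_. M)) = 0"
    and "(\<integral>x. W x ^ 2 \<partial>PiM {..<n} (\<lambda>_. M)) = v / real n"
    and "(\<integral>x. W x ^ 4 \<partial>PiM {..<n} (\<lambda>_. M)) \<le> 4 * (v / real n)^2"
proof -
  note S = sum_moments[OF M fm fb f0 f2, of n]
  show "prob_space (PiM {..<n} (\<lambda>_. M))" by (rule S(1))
  show "W \<in> borel_measurable (PiM {..<n} (\<lambda>_. M))" unfolding W_def using S(2) by measurable
  have c2: "c^2 = 1" using c by (metis abs_power2 power2_abs power_one abs_one)
  have c4: "c^4 = 1" using c2 by (metis power_mult numeral_times_numeral semiring_norm(12) one_power2 num_double)
  show "AE x in PiM {..<n} (\<lambda>_. M). \<bar>W x\<bar> \<le> C"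
    using S(3) proof eventually_elim
    case (elim x)
    then show ?case using n unfolding W_def by (simp add: abs_mult c field_simps)
  qed
  show "(\<integral>x. W x \<partial>PiM {..<n} (\<lambda>_. M)) = 0" unfolding W_def using S(4) by simp
  have "(\<integral>x. W x ^ 2 \<partial>PiM {..<n} (\<lambda>_. M)) = (c^2 / real n ^ 2) * (\<integral>x. (\<Sum>i<n. f (x i)) ^ 2 \<partial>PiM {..<n} (\<lambda>_. M))"
    unfolding W_def by (simp add: power_divide power_mult_distrib)
  then show "(\<integral>x. W x ^ 2 \<partial>PiM {..<n} (\<lambda>_. M)) = v / real n"
    using S(5) n c2 by (simp add: power2_eq_square)
  have "(\<integral>x. W x ^ 4 \<partial>PiM {..<n} (\<lambda>_. M)) = (c^4 / real n ^ 4) * (\<integral>x. (\<Sum>i<n. f (x i)) ^ 4 \<partial>PiM {..<n} (\<lambda>_. M))"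
    unfolding W_def by (simp add: power_divide power_mult_distrib)
  also have "\<dots> \<le> (1 / real n ^ 4) * (real n * C^2 * v + 3 * (real n)^2 * v^2)"
    using S(6) c4 by (simp add: divide_right_mono)
  also have "\<dots> \<le> (1 / real n ^ 4) * (real n * (real n * v) * v + 3 * (real n)^2 * v^2)"
  proof -
    have v0: "0 \<le> v" unfolding f2[symmetric] by simp
    have "real n * C^2 * v \<le> real n * (real n * v) * v"
      using Cv v0 n by (intro mult_right_mono mult_left_mono) auto
    then show ?thesis by (intro mult_left_mono) auto
  qed
  also have "\<dots> = 4 * (v / real n)^2" using n by (simp add: field_simps power2_eq_square power4_eq_xxxx)
  finally show "(\<integral>x. W x ^ 4 \<partial>PiM {..<n} (\<lambda>_. M)) \<le> 4 * (v / real n)^2" .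
qed


theorem theorem2:
  fixes T :: "nat \<Rightarrow> ('x \<times> real) measure"
    and pr :: "'x \<times> real \<Rightarrow> nat \<Rightarrow> real"
    and g :: "'x \<Rightarrow> real"
    and n0 n1 :: nat
    and B :: real
  defines "\<omega> \<equiv> true_weight T pr"
  defines "s \<equiv> sqrt (sigma2 T pr g \<omega> 0 / real n0 + sigma2 T pr g \<omega> 1 / real n1)"
  assumes T_prob: "\<And>a. a \<in> {0, 1} \<Longrightarrow> prob_space (T a)"
    and T_sets: "sets (T 1) = sets (T 0)"
    and g_range: "\<And>x. g x \<in> {0..1}"
    and y_range: "\<And>a. a \<in> {0, 1} \<Longrightarrow> AE z in T a. snd z \<in> {0..1}"
    and g_meas: "\<And>a. a \<in> {0, 1} \<Longrightarrow> (\<lambda>z. g (fst z)) \<in> borel_measurable (T a)"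
    and y_meas: "\<And>a. a \<in> {0, 1} \<Longrightarrow> snd \<in> borel_measurable (T a)"
    and pr_meas: "\<And>a. a \<in> {0, 1} \<Longrightarrow> (\<lambda>z. pr z a) \<in> borel_measurable (T a)"
    and pr_range: "\<And>a z. a \<in> {0, 1} \<Longrightarrow> z \<in> space (T a) \<Longrightarrow> 0 < pr z a \<and> pr z a \<le> 1"
    and B_bdd: "bdd_above {\<omega> z a | z a. a \<in> {0, 1} \<and> z \<in> space (T a)}"
    and B_def: "B = Sup {\<omega> z a | z a. a \<in> {0, 1} \<and> z \<in> space (T a)}"
    and sigma_pos: "\<And>a. a \<in> {0, 1} \<Longrightarrow> sigma2 T pr g \<omega> a > 0"
    and B_cond: "\<And>a. a \<in> {0, 1} \<Longrightarrow> B\<^sup>2 / sigma2 T pr g \<omega> a \<le> real n0"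
    and n_le: "n0 \<le> n1"
  shows "measure (sample_space T pr n0 n1)
     {uv \<in> space (sample_space T pr n0 n1).
        (let D = (true_risk T g 0 - true_risk T g 1)
                 - (emp_risk g \<omega> 0 n0 (fst uv) - emp_risk g \<omega> 1 n1 (snd uv));
             DeltaT = \<bar>true_risk T g 0 - true_risk T g 1\<bar>;
             DeltaS = \<bar>emp_risk g \<omega> 0 n0 (fst uv) - emp_risk g \<omega> 1 n1 (snd uv)\<bar>
         in 12 * s \<ge> \<bar>D\<bar> \<and> \<bar>D\<bar> \<ge> s / 24
            \<and> (DeltaS \<ge> 13 / 2 * s \<longrightarrow> \<bar>DeltaT - DeltaS\<bar> \<ge> s / 24)
            \<and> (DeltaS \<le> s / 72 \<longrightarrow> \<bar>DeltaT - DeltaS\<bar> \<ge> s / 72))}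
     \<ge> 7 / 1440"
proof -
  define h where "h = (\<lambda>a z. \<omega> z a * loss g z)"
  define f where "f = (\<lambda>a z. h a z - true_risk T g a)"
  define v where "v = (\<lambda>a. sigma2 T pr g \<omega> a)"
  have lm: "loss g \<in> borel_measurable (T a)" if "a \<in> {0,1}" for a
    unfolding loss_def
    by (rule borel_measurable_abs, rule borel_measurable_diff) (use g_meas[OF that] y_meas[OF that] in auto)
  have lb: "AE z in T a. 0 \<le> loss g z \<and> loss g z \<le> 1" if "a \<in> {0,1}" for a
    using y_range[OF that]
  proof eventually_elim
    case (elim z)
    then show ?case using g_range[of "fst z"] unfolding loss_def by auto
  qed
  have wB: "\<omega> z a \<le> B" if "a \<in> {0,1}" "z \<in> space (T a)" for a z
    unfolding B_def by (rule cSup_upper[OF _ B_bdd]) (use that in blast)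
  have grp: "prob_space (cc_dist T pr a) \<and> f a \<in> borel_measurable (cc_dist T pr a)
      \<and> (AE z in cc_dist T pr a. \<bar>f a z\<bar> \<le> B) \<and> (\<integral>z. f a z \<partial>cc_dist T pr a) = 0
      \<and> (\<integral>z. f a z ^ 2 \<partial>cc_dist T pr a) = v a
      \<and> (\<forall>z. h a z = f a z + true_risk T g a) \<and> (\<exists>z. z \<in> space (T a) \<and> 0 < \<omega> z a)" if a: "a \<in> {0,1}" for a
  proof -
    have prr: "\<And>z. z \<in> space (T a) \<Longrightarrow> 0 < pr z a \<and> pr z a \<le> 1" by (rule pr_range[OF a])
    note GF = group_facts'[of T a pr g, OF T_prob[OF a] pr_meas[OF a] prr lm[OF a] lb[OF a]]
    have wpos: "\<And>z. z \<in> space (T a) \<Longrightarrow> 0 < \<omega> z a" unfolding \<omega>_def by (rule GF(4)) auto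
    interpret C: prob_space "cc_dist T pr a" by (rule GF(1))
    have hm: "h a \<in> borel_measurable (cc_dist T pr a)"
    proof -
      have "h a \<in> borel_measurable (T a)"
        unfolding h_def \<omega>_def using GF(5) lm[OF a] by (intro borel_measurable_times) auto
      then show ?thesis by (subst measurable_cong_sets[OF GF(2) refl])
    qed
    have hb: "AE z in cc_dist T pr a. 0 \<le> h a z \<and> h a z \<le> B"
    proof -
    have l7: "AE z in cc_dist T pr a. 0 \<le> loss g z \<and> loss g z \<le> 1" by (rule GF(7))
    show ?thesis
    proof (rule AE_mp[OF l7], rule AE_I2, intro impI)
      fix z assume zs: "z \<in> space (cc_dist T pr a)" and elim: "0 \<le> loss g z \<and> loss g z \<le> 1"
      then have z: "z \<in> space (T a)" using GF(3) by simp
      have "\<omega> z a * loss g z \<le> B * 1"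
        using elim wB[OF a z] wpos[OF z] unfolding \<omega>_def by (intro mult_mono) auto
      then show "0 \<le> h a z \<and> h a z \<le> B" using elim wpos[OF z] unfolding h_def \<omega>_def by auto
    qed
    qed
    have hi: "integrable (cc_dist T pr a) (h a)"
      by (rule C.integrable_const_bound[where B=B]) (use hb hm in auto)
    have mu: "(\<integral>z. h a z \<partial>cc_dist T pr a) = true_risk T g a"
      using GF(6) unfolding h_def \<omega>_def .
    have mu0: "0 \<le> true_risk T g a" unfolding mu[symmetric]
      by (rule integral_nonneg_AE) (use hb in auto)
    have muB: "true_risk T g a \<le> B"
    proof -
      have "(\<integral>z. h a z \<partial>cc_dist T pr a) \<le> (\<integral>z. B \<partial>cc_dist T pr a)"
        by (rule integral_mono_AE[OF hi]) (use hb in auto)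
      then show ?thesis using mu by (simp add: C.prob_space)
    qed
    have fm: "f a \<in> borel_measurable (cc_dist T pr a)" unfolding f_def using hm by measurable
    have fb: "AE z in cc_dist T pr a. \<bar>f a z\<bar> \<le> B"
      using hb by eventually_elim (use mu0 muB in \<open>auto simp: f_def\<close>)
    have f0: "(\<integral>z. f a z \<partial>cc_dist T pr a) = 0"
      unfolding f_def using hi mu by (simp add: C.prob_space)
    have f2: "(\<integral>z. f a z ^ 2 \<partial>cc_dist T pr a) = v a"
      unfolding v_def sigma2_def f_def mu[symmetric] h_def by simp
    have ex: "\<exists>z. z \<in> space (T a) \<and> 0 < \<omega> z a"
    proof -
      interpret Ta: prob_space "T a" by (rule T_prob[OF a])
      have "space (T a) \<noteq> {}" by (rule Ta.not_empty)
      then obtain z where "z \<in> space (T a)" by blast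
      then show ?thesis using wpos by blast
    qed
    show ?thesis using GF(1) fm fb f0 f2 ex by (simp add: f_def)
  qed
  have v0: "0 < v 0" and v1: "0 < v 1" unfolding v_def using sigma_pos by auto
  have B0: "0 < B"
  proof -
    obtain z where "z \<in> space (T 0)" "0 < \<omega> z 0" using grp[of 0] by auto
    then show ?thesis using wB[of 0 z] by auto
  qed
  have Bv: "B^2 \<le> real n0 * v a" if "a \<in> {0,1}" for a
    using B_cond[OF that] sigma_pos[OF that] unfolding v_def by (simp add: field_simps)
  have n0: "0 < n0"
  proof (rule ccontr)
    assume "\<not> 0 < n0"
    then have "B^2 \<le> 0" using Bv[of 0] by simp
    moreover have "0 < B^2" using B0 by simp
    ultimately show False by linarith
  qed
  have n1: "0 < n1" using n0 n_le by simp
  have Bv1: "B^2 \<le> real n1 * v 1"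
  proof -
    have "real n0 * v 1 \<le> real n1 * v 1" using n_le v1 by (intro mult_right_mono) auto
    then show ?thesis using Bv[of 1] by simp
  qed
  define U where "U = (\<lambda>x. (-1) * (\<Sum>i<n0. f 0 (x i)) / real n0)"
  define V where "V = (\<lambda>x. 1 * (\<Sum>i<n1. f 1 (x i)) / real n1)"
  note SU = scaled_moments[of "cc_dist T pr 0" "f 0" B "v 0" n0 "-1", folded U_def]
  note SV = scaled_moments[of "cc_dist T pr 1" "f 1" B "v 1" n1 1, folded V_def]
  from grp[of 0] have P0: "prob_space (cc_dist T pr 0)" and fm0: "f 0 \<in> borel_measurable (cc_dist T pr 0)"
    and fb0: "AE z in cc_dist T pr 0. \<bar>f 0 z\<bar> \<le> B" and f00: "(\<integral>z. f 0 z \<partial>cc_dist T pr 0) = 0"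
    and f20: "(\<integral>z. f 0 z ^ 2 \<partial>cc_dist T pr 0) = v 0" by auto
  from grp[of 1] have P1: "prob_space (cc_dist T pr 1)" and fm1: "f 1 \<in> borel_measurable (cc_dist T pr 1)"
    and fb1: "AE z in cc_dist T pr 1. \<bar>f 1 z\<bar> \<le> B" and f01: "(\<integral>z. f 1 z \<partial>cc_dist T pr 1) = 0"
    and f21: "(\<integral>z. f 1 z ^ 2 \<partial>cc_dist T pr 1) = v 1" by auto
  have Bv0: "B^2 \<le> real n0 * v 0" using Bv[of 0] by simp
  have cm: "\<bar>-1::real\<bar> = 1" and cp: "\<bar>1::real\<bar> = 1" by simp_all
  have SU: "prob_space (PiM {..<n0} (\<lambda>_. cc_dist T pr 0))"
    "U \<in> borel_measurable (PiM {..<n0} (\<lambda>_. cc_dist T pr 0))"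
    "AE x in PiM {..<n0} (\<lambda>_. cc_dist T pr 0). \<bar>U x\<bar> \<le> B"
    "(\<integral>x. U x \<partial>PiM {..<n0} (\<lambda>_. cc_dist T pr 0)) = 0"
    "(\<integral>x. U x ^ 2 \<partial>PiM {..<n0} (\<lambda>_. cc_dist T pr 0)) = v 0 / real n0"
    "(\<integral>x. U x ^ 4 \<partial>PiM {..<n0} (\<lambda>_. cc_dist T pr 0)) \<le> 4 * (v 0 / real n0)^2"
    using scaled_moments[OF P0 fm0 fb0 f00 f20 n0 Bv0 cm] unfolding U_def by auto
  have SV: "prob_space (PiM {..<n1} (\<lambda>_. cc_dist T pr 1))"
    "V \<in> borel_measurable (PiM {..<n1} (\<lambda>_. cc_dist T pr 1))"
    "AE x in PiM {..<n1} (\<lambda>_. cc_dist T pr 1). \<bar>V x\<bar> \<le> B"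
    "(\<integral>x. V x \<partial>PiM {..<n1} (\<lambda>_. cc_dist T pr 1)) = 0"
    "(\<integral>x. V x ^ 2 \<partial>PiM {..<n1} (\<lambda>_. cc_dist T pr 1)) = v 1 / real n1"
    "(\<integral>x. V x ^ 4 \<partial>PiM {..<n1} (\<lambda>_. cc_dist T pr 1)) \<le> 4 * (v 1 / real n1)^2"
    using scaled_moments[OF P1 fm1 fb1 f01 f21 n1 Bv1 cp] unfolding V_def by auto
  define SS where "SS = sample_space T pr n0 n1"
  define W where "W = (\<lambda>z. U (fst z) + V (snd z))"
  note PM = pair_moments[OF SU(1) SV(1) SU(2) SU(3) SV(2) SV(3) SU(4) SV(4) SU(5) SV(5) SU(6) SV(6),
      folded sample_space_def W_def, folded SS_def]
  define a where "a = v 0 / real n0"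
  define b where "b = v 1 / real n1"
  have a0: "0 < a" unfolding a_def using v0 n0 by simp
  have b0: "0 < b" unfolding b_def using v1 n1 by simp
  have s2: "s^2 = a + b" unfolding s_def a_def b_def v_def using a0 b0 unfolding a_def b_def v_def by simp
  have spos: "0 < s" unfolding s_def using a0 b0 unfolding a_def b_def v_def by simp
  have PS: "prob_space SS" unfolding SS_def sample_space_def by (rule prob_space_pair[OF SU(1) SV(1)])
  interpret S: prob_space SS by (rule PS)
  have Wm[measurable]: "W \<in> borel_measurable SS" using PM(1) unfolding W_def .
  have W2: "(\<integral>z. W z ^ 2 \<partial>SS) = s^2" using PM(3) s2 unfolding a_def b_def W_def by simp
  have W4: "(\<integral>z. W z ^ 4 \<partial>SS) \<le> 4 * (s^2)^2"
  proof -
    have "(\<integral>z. W z ^ 4 \<partial>SS) \<le> 4 * a^2 + 6 * a * b + 4 * b^2" using PM(4) unfolding a_def b_def W_def .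
    also have "\<dots> \<le> 4 * (a + b)^2" using a0 b0 by (simp add: power2_eq_square algebra_simps)
    finally show ?thesis using s2 by simp
  qed
  have emp: "emp_risk g \<omega> a' n u = (\<Sum>i<n. f a' (u i)) / real n + true_risk T g a'" if "0 < n" for a' n u
  proof -
    have "(\<Sum>i<n. \<omega> (u i) a' * loss g (u i)) = (\<Sum>i<n. f a' (u i)) + real n * true_risk T g a'"
      unfolding f_def h_def by (simp add: sum_subtractf)
    then show ?thesis unfolding emp_risk_def using that by (simp add: field_simps)
  qed
  have DW: "(true_risk T g 0 - true_risk T g 1) - (emp_risk g \<omega> 0 n0 (fst uv) - emp_risk g \<omega> 1 n1 (snd uv))
      = W uv" for uv
    unfolding W_def U_def V_def emp[OF n0] emp[OF n1] by simp
  define E where "E = {uv \<in> space SS. s/24 \<le> \<bar>W uv\<bar> \<and> \<bar>W uv\<bar> \<le> 12 * s}"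
  have Eeq: "{uv \<in> space (sample_space T pr n0 n1).
        (let D = (true_risk T g 0 - true_risk T g 1)
                 - (emp_risk g \<omega> 0 n0 (fst uv) - emp_risk g \<omega> 1 n1 (snd uv));
             DeltaT = \<bar>true_risk T g 0 - true_risk T g 1\<bar>;
             DeltaS = \<bar>emp_risk g \<omega> 0 n0 (fst uv) - emp_risk g \<omega> 1 n1 (snd uv)\<bar>
         in 12 * s \<ge> \<bar>D\<bar> \<and> \<bar>D\<bar> \<ge> s / 24
            \<and> (DeltaS \<ge> 13 / 2 * s \<longrightarrow> \<bar>DeltaT - DeltaS\<bar> \<ge> s / 24)
            \<and> (DeltaS \<le> s / 72 \<longrightarrow> \<bar>DeltaT - DeltaS\<bar> \<ge> s / 72))} = E"
    (is "?L = _")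
  proof (rule set_eqI)
    fix uv
    let ?X = "true_risk T g 0 - true_risk T g 1"
    let ?Y = "emp_risk g \<omega> 0 n0 (fst uv) - emp_risk g \<omega> 1 n1 (snd uv)"
    have d: "?X - ?Y = W uv" by (rule DW)
    show "uv \<in> ?L \<longleftrightarrow> uv \<in> E"
      using det_part[of s ?X ?Y] d spos unfolding E_def SS_def Let_def by auto
  qed
  have Em: "E \<in> sets SS" unfolding E_def by measurable
  define q where "q = (\<lambda>t::real. t^2/(36 * s^2) - t^4/(5184 * s^4) - 1/20736)"
  have iW: "integrable SS (\<lambda>z. W z ^ k)" for k using PM(2) unfolding W_def .
  have "559/20736 \<le> (\<integral>z. q (W z) \<partial>SS)"
  proof -
    have "(\<integral>z. q (W z) \<partial>SS) = (\<integral>z. W z ^ 2 \<partial>SS) / (36 * s^2) - (\<integral>z. W z ^ 4 \<partial>SS) / (5184 * s^4) - 1/20736"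
      unfolding q_def using iW[of 2] iW[of 4] by (simp add: S.prob_space)
    also have "\<dots> \<ge> s^2 / (36 * s^2) - (4 * (s^2)^2) / (5184 * s^4) - 1/20736"
    proof -
      have "(\<integral>z. W z ^ 4 \<partial>SS) / (5184 * s^4) \<le> (4 * (s^2)^2) / (5184 * s^4)"
        using W4 spos by (intro divide_right_mono) auto
      then show ?thesis unfolding W2 by linarith
    qed
    also have "s^2 / (36 * s^2) - (4 * (s^2)^2) / (5184 * s^4) - 1/20736 = 559/20736"
      using spos by (simp add: field_simps power2_eq_square power4_eq_xxxx)
    finally show ?thesis by simp
  qed
  also have "(\<integral>z. q (W z) \<partial>SS) \<le> (\<integral>z. indicator E z \<partial>SS)"
  proof (rule integral_mono)
    show "integrable SS (\<lambda>z. q (W z))" unfolding q_def using iW[of 2] iW[of 4] by simp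
    show "integrable SS (indicator E :: _ \<Rightarrow> real)"
      using Em by (intro integrable_real_indicator) (simp_all add: S.emeasure_finite less_top[symmetric])
    fix z assume z: "z \<in> space SS"
    show "q (W z) \<le> indicator E z"
      using poly_ind[OF spos, of "W z"] z unfolding q_def E_def indicator_def by auto
  qed
  also have "\<dots> = measure SS E" using Em by simp
  finally have "559/20736 \<le> measure SS E" .
  then show ?thesis unfolding Eeq[unfolded SS_def[symmetric]] SS_def[symmetric] by simp
qed

end
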